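(* Let $u_0\in H^4(\mathbb{R})$ be non-trivial, let $u$ be the solution of the Degasperis–Procesi equation with $u(x,0)=u_0(x)$ and maximal existence time $T>0$, let $\mathcal{S}=\mathbb{R}\times(0,T)$, and let $U$ be a simply connected component of $\mathcal{S}$ on which the forms $\omega_1,\omega_2$ below are linearly independent ($\omega_1\wedge\omega_2\neq0$). Then one can find smooth real-valued functions $a,b,c$, locally defined on $U$, such that $$\omega_{13}=a\omega_1+b\omega_2,\qquad \omega_{23}=b\omega_1+c\omega_2$$ are connection forms which, jointly with $\omega_1$, $\omega_2$ and $\omega_{12}:=\omega_3$, determine the first two fundamental forms of a pseudospherical surface; that is, $d\omega_1=\omega_{12}\wedge\omega_2$, $d\omega_2=\omega_1\wedge\omega_{12}$, $\omega_1\wedge\omega_{13}+\omega_2\wedge\omega_{23}=0$, $d\omega_{12}=-\omega_{13}\wedge\omega_{23}$, $d\omega_{13}=\omega_{12}\wedge\omega_{23}$, $d\omega_{23}=-\omega_{12}\wedge\omega_{13}$.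
   Context: Degasperis–Procesi equation: $u_t+uu_x+\tfrac32\partial_x(1-\partial_x^2)^{-1}(u^2)=0$ with $(1-\partial_x^2)^{-1}f=G\ast f$, $G(x)=\tfrac12e^{-|x|}$; for $u_0\in H^4(\mathbb{R})$ it has a unique solution in $C^0([0,T);H^4(\mathbb{R}))\cap C^1([0,T);H^3(\mathbb{R}))$ on a maximal interval. With $m=u-u_{xx}$, $F=u_x^2-2uu_x+uu_{xx}$, real $\mu$ and a fixed sign choice: $\omega_1=m\,dx+F\,dt$, $\omega_2=(\mu m\pm2\sqrt{1+\mu^2})dx+\mu F\,dt$, $\omega_3=(\pm\sqrt{1+\mu^2}\,m+2\mu)dx\pm\sqrt{1+\mu^2}\,F\,dt$. By the fundamental theorem of surface theory (Bonnet), $C^1$ one-forms $\omega_1,\omega_2,\omega_{12},\omega_{13},\omega_{23}$ with $\omega_1\wedge\omega_2\neq0$ satisfying the listed equations determine locally a surface in $\mathbb{R}^3$ up to a Euclidean motion, with first fundamental form $\omega_1^2+\omega_2^2$ and second fundamental form determined by $a,b,c$. *)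

theory Defs
  imports "HOL-Analysis.Analysis"
begin

text \<open>D is a chain of derivatives of f up to order k: D 0 = f, classical derivatives
  D j' = D (j+1) for j+1 < k, the (k-1)-st derivative is an indefinite integral of D k
  (weak k-th derivative), and all D j (j \<le> k) are square integrable.\<close>
definition sob_derivs :: "nat \<Rightarrow> (real \<Rightarrow> real) \<Rightarrow> (nat \<Rightarrow> real \<Rightarrow> real) \<Rightarrow> bool" where
  "sob_derivs k f D \<longleftrightarrow>
     D 0 = f \<and>
     (\<forall>j x. Suc j < k \<longrightarrow> (D j has_real_derivative D (Suc j) x) (at x)) \<and>
     (1 \<le> k \<longrightarrow> (\<forall>a b. a \<le> b \<longrightarrow> (D k has_integral (D (k - 1) b - D (k - 1) a)) {a..b})) \<and>
     (\<forall>j\<le>k. D j \<in> borel_measurable lborel \<and> integrable lborel (\<lambda>x. (D j x)\<^sup>2))"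

definition sobolev :: "nat \<Rightarrow> (real \<Rightarrow> real) \<Rightarrow> bool" where
  "sobolev k f \<longleftrightarrow> (\<exists>D. sob_derivs k f D)"

definition hnorm :: "nat \<Rightarrow> (real \<Rightarrow> real) \<Rightarrow> real" where
  "hnorm k f = sqrt (\<Sum>j\<le>k. LINT x|lborel. ((SOME D. sob_derivs k f D) j x)\<^sup>2)"

definition G :: "real \<Rightarrow> real" where
  "G x = exp (- \<bar>x\<bar>) / 2"

text \<open>u x t is the solution; T may be infinite.  u \<in> C^0([0,T);H^4) \<inter> C^1([0,T);H^3),
  with time derivative v, and u_t + u u_x + 3/2 d/dx (G * u^2) = 0.\<close>
definition dp_solution :: "(real \<Rightarrow> real) \<Rightarrow> ereal \<Rightarrow> (real \<Rightarrow> real \<Rightarrow> real) \<Rightarrow> bool" where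
  "dp_solution u0 T u \<longleftrightarrow>
     (let I = {t::real. 0 \<le> t \<and> ereal t < T} in
     (\<forall>x. u x 0 = u0 x) \<and>
     (\<forall>t\<in>I. sobolev 4 (\<lambda>x. u x t)) \<and>
     (\<forall>t\<in>I. ((\<lambda>s. hnorm 4 (\<lambda>x. u x s - u x t)) \<longlongrightarrow> 0) (at t within I)) \<and>
     (\<exists>v. (\<forall>t\<in>I. sobolev 3 (\<lambda>x. v x t)) \<and>
          (\<forall>t\<in>I. ((\<lambda>s. hnorm 3 (\<lambda>x. v x s - v x t)) \<longlongrightarrow> 0) (at t within I)) \<and>
          (\<forall>t\<in>I. ((\<lambda>s. hnorm 3 (\<lambda>x. (u x s - u x t) / (s - t) - v x t)) \<longlongrightarrow> 0) (at t within I)) \<and>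
          (\<forall>t\<in>I. \<forall>x. v x t + u x t * deriv (\<lambda>y. u y t) x
               + 3/2 * deriv (\<lambda>y. LINT z|lborel. G (y - z) * (u z t)\<^sup>2) x = 0)))"

text \<open>A one-form f dx + g dt is represented by the pair (f, g); two-forms h dx\<and>dt by h.\<close>
type_synonym form1 = "((real \<times> real) \<Rightarrow> real) \<times> ((real \<times> real) \<Rightarrow> real)"

definition wedge :: "form1 \<Rightarrow> form1 \<Rightarrow> (real \<times> real) \<Rightarrow> real" where
  "wedge \<omega> \<eta> p = fst \<omega> p * snd \<eta> p - snd \<omega> p * fst \<eta> p"

definition ext_deriv_on :: "(real \<times> real) set \<Rightarrow> form1 \<Rightarrow> ((real \<times> real) \<Rightarrow> real) \<Rightarrow> bool" where
  "ext_deriv_on V \<omega> h \<longleftrightarrow>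
     (\<forall>p\<in>V. \<exists>f' g'. (fst \<omega> has_derivative f') (at p) \<and> (snd \<omega> has_derivative g') (at p) \<and>
        h p = g' (1, 0) - f' (0, 1))"

definition form_add :: "form1 \<Rightarrow> form1 \<Rightarrow> form1" where
  "form_add \<omega> \<eta> = (\<lambda>p. fst \<omega> p + fst \<eta> p, \<lambda>p. snd \<omega> p + snd \<eta> p)"

definition form_scale :: "((real \<times> real) \<Rightarrow> real) \<Rightarrow> form1 \<Rightarrow> form1" where
  "form_scale a \<omega> = (\<lambda>p. a p * fst \<omega> p, \<lambda>p. a p * snd \<omega> p)"

text \<open>C^\<infinity> on V: all iterated partial derivatives exist (D (True#js) = \<partial>_x D js,
  D (False#js) = \<partial>_t D js) as Frechet derivatives at every point of V.\<close>
definition smooth_on :: "(real \<times> real) set \<Rightarrow> ((real \<times> real) \<Rightarrow> real) \<Rightarrow> bool" where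
  "smooth_on V f \<longleftrightarrow> (\<exists>D :: bool list \<Rightarrow> (real \<times> real) \<Rightarrow> real. D [] = f \<and>
     (\<forall>js. \<forall>p\<in>V. (D js has_derivative (\<lambda>h. fst h * D (True # js) p + snd h * D (False # js) p)) (at p)))"

definition ux :: "(real \<Rightarrow> real \<Rightarrow> real) \<Rightarrow> real \<times> real \<Rightarrow> real" where
  "ux u p = deriv (\<lambda>y. u y (snd p)) (fst p)"

definition uxx :: "(real \<Rightarrow> real \<Rightarrow> real) \<Rightarrow> real \<times> real \<Rightarrow> real" where
  "uxx u p = deriv (\<lambda>y. deriv (\<lambda>z. u z (snd p)) y) (fst p)"

definition mm :: "(real \<Rightarrow> real \<Rightarrow> real) \<Rightarrow> real \<times> real \<Rightarrow> real" where
  "mm u p = u (fst p) (snd p) - uxx u p"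

definition FF :: "(real \<Rightarrow> real \<Rightarrow> real) \<Rightarrow> real \<times> real \<Rightarrow> real" where
  "FF u p = (ux u p)\<^sup>2 - 2 * u (fst p) (snd p) * ux u p + u (fst p) (snd p) * uxx u p"

definition om1 :: "(real \<Rightarrow> real \<Rightarrow> real) \<Rightarrow> form1" where
  "om1 u = (mm u, FF u)"

text \<open>\<sigma> \<in> {1,-1} is the fixed sign choice \<plusminus>.\<close>
definition om2 :: "(real \<Rightarrow> real \<Rightarrow> real) \<Rightarrow> real \<Rightarrow> real \<Rightarrow> form1" where
  "om2 u \<mu> \<sigma> = (\<lambda>p. \<mu> * mm u p + \<sigma> * 2 * sqrt (1 + \<mu>\<^sup>2), \<lambda>p. \<mu> * FF u p)"

definition om3 :: "(real \<Rightarrow> real \<Rightarrow> real) \<Rightarrow> real \<Rightarrow> real \<Rightarrow> form1" where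
  "om3 u \<mu> \<sigma> = (\<lambda>p. \<sigma> * sqrt (1 + \<mu>\<^sup>2) * mm u p + 2 * \<mu>, \<lambda>p. \<sigma> * sqrt (1 + \<mu>\<^sup>2) * FF u p)"

end

theory Submission
  imports Defs
begin


lemma abs_le_sq_bound:
  fixes a e :: real assumes "e > 0"
  shows "\<bar>a\<bar> \<le> e/2 + a\<^sup>2/(2*e)"
proof -
  have "0 \<le> (\<bar>a\<bar> - e)\<^sup>2" by simp
  hence "2*e*\<bar>a\<bar> \<le> a\<^sup>2 + e\<^sup>2" by (simp add: power2_eq_square algebra_simps)
  thus ?thesis using assms by (simp add: field_simps power2_eq_square)
qed

lemma deriv_has_integral:
  fixes f f' :: "real \<Rightarrow> real"
  assumes "\<And>x. (f has_real_derivative f' x) (at x)" "a \<le> b"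
  shows "(f' has_integral (f b - f a)) {a..b}"
  apply (rule fundamental_theorem_of_calculus[OF assms(2)])
  using assms(1) by (auto simp: has_real_derivative_iff_has_vector_derivative[symmetric] intro: has_field_derivative_at_within)

lemma sob_embed:
  fixes g g' :: "real \<Rightarrow> real"
  assumes hi: "\<And>a b. a \<le> b \<Longrightarrow> (g' has_integral (g b - g a)) {a..b}"
    and i1: "(\<lambda>x. (g x)\<^sup>2) integrable_on UNIV" and i2: "(\<lambda>x. (g' x)\<^sup>2) integrable_on UNIV"
    and e: "e > 0"
  shows "\<bar>g x\<bar> \<le> e + (integral UNIV (\<lambda>x. (g x)\<^sup>2) + integral UNIV (\<lambda>x. (g' x)\<^sup>2)) / (2*e)"
proof -
  define J where "J = integral UNIV (\<lambda>x. (g x)\<^sup>2)"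
  define J' where "J' = integral UNIV (\<lambda>x. (g' x)\<^sup>2)"
  have i1s: "(\<lambda>x. (g x)\<^sup>2) integrable_on {a..b}" for a b by (rule integrable_on_subinterval[OF i1]) auto
  have i2s: "(\<lambda>x. (g' x)\<^sup>2) integrable_on {a..b}" for a b by (rule integrable_on_subinterval[OF i2]) auto
  have bi: "(\<lambda>z. e/2 + (g' z)\<^sup>2/(2*e)) integrable_on {a..b}" for a b
    by (intro integrable_add integrable_on_const integrable_on_divide i2s) auto
  have J'x: "integral {x..x+1} (\<lambda>x. (g' x)\<^sup>2) \<le> J'"
    unfolding J'_def by (rule integral_subset_le) (auto intro: i2s i2)
  have Jx: "integral {x..x+1} (\<lambda>x. (g x)\<^sup>2) \<le> J"
    unfolding J_def by (rule integral_subset_le) (auto intro: i1s i1)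
  have step: "\<bar>g y - g x\<bar> \<le> e/2 + J'/(2*e)" if y: "y \<in> {x..x+1}" for y
  proof -
    have "(g' has_integral (g y - g x)) {x..y}" using hi y by auto
    hence "g y - g x = integral {x..y} g'" and gi: "g' integrable_on {x..y}"
      by (auto simp: integral_unique integrable_on_def)
    hence "\<bar>g y - g x\<bar> \<le> integral {x..y} (\<lambda>z. e/2 + (g' z)\<^sup>2/(2*e))"
      using integral_norm_bound_integral[OF gi bi] abs_le_sq_bound[OF e] by auto
    also have "\<dots> \<le> integral {x..x+1} (\<lambda>z. e/2 + (g' z)\<^sup>2/(2*e))"
      apply (rule integral_subset_le) using y e by (auto intro!: bi add_nonneg_nonneg)
    also have "\<dots> = e/2 + integral {x..x+1} (\<lambda>x. (g' x)\<^sup>2) / (2*e)"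
      by (subst integral_add) (auto intro: integrable_on_divide i2s)
    also have "\<dots> \<le> e/2 + J'/(2*e)" using J'x e by (simp add: divide_right_mono)
    finally show ?thesis .
  qed
  have pt: "\<bar>g x\<bar> - e - J'/(2*e) \<le> (g y)\<^sup>2/(2*e)" if y: "y \<in> {x..x+1}" for y
    using step[OF y] abs_le_sq_bound[OF e, of "g y"] by linarith
  have "integral {x..x+1} (\<lambda>y. \<bar>g x\<bar> - e - J'/(2*e)) \<le> integral {x..x+1} (\<lambda>y. (g y)\<^sup>2/(2*e))"
    by (rule integral_le) (auto intro: pt integrable_on_divide i1s)
  hence "\<bar>g x\<bar> - e - J'/(2*e) \<le> integral {x..x+1} (\<lambda>x. (g x)\<^sup>2)/(2*e)" by simp
  also have "\<dots> \<le> J/(2*e)" using Jx e by (simp add: divide_right_mono)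
  finally show ?thesis unfolding J_def[symmetric] J'_def[symmetric] by (simp add: add_divide_distrib)
qed



lemma sq_comb_le: fixes a b c d :: real shows "(a*c + b*d)\<^sup>2 \<le> 2*a\<^sup>2*c\<^sup>2 + 2*b\<^sup>2*d\<^sup>2"
proof -
  have "0 \<le> (a*c - b*d)\<^sup>2" by simp
  thus ?thesis by (simp add: power2_eq_square algebra_simps)
qed

lemma sob_lin:
  assumes D: "sob_derivs k f D" and E: "sob_derivs k g E" and h: "h = (\<lambda>x. \<alpha> * f x + \<beta> * g x)"
  shows "sob_derivs k h (\<lambda>j x. \<alpha> * D j x + \<beta> * E j x)"
proof -
  have D0: "D 0 = f" and Dd: "\<And>j x. Suc j < k \<Longrightarrow> (D j has_real_derivative D (Suc j) x) (at x)"
    and Di: "1 \<le> k \<Longrightarrow> (\<forall>a b. a \<le> b \<longrightarrow> (D k has_integral (D (k - 1) b - D (k - 1) a)) {a..b})"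
    and Dm: "\<And>j. j \<le> k \<Longrightarrow> D j \<in> borel_measurable lborel"
    and Dl: "\<And>j. j \<le> k \<Longrightarrow> integrable lborel (\<lambda>x. (D j x)\<^sup>2)"
    using D unfolding sob_derivs_def by auto
  have E0: "E 0 = g" and Ed: "\<And>j x. Suc j < k \<Longrightarrow> (E j has_real_derivative E (Suc j) x) (at x)"
    and Ei: "1 \<le> k \<Longrightarrow> (\<forall>a b. a \<le> b \<longrightarrow> (E k has_integral (E (k - 1) b - E (k - 1) a)) {a..b})"
    and Em: "\<And>j. j \<le> k \<Longrightarrow> E j \<in> borel_measurable lborel"
    and El: "\<And>j. j \<le> k \<Longrightarrow> integrable lborel (\<lambda>x. (E j x)\<^sup>2)"
    using E unfolding sob_derivs_def by auto
  show ?thesis unfolding sob_derivs_def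
  proof (intro conjI allI impI)
    show "(\<lambda>x. \<alpha> * D 0 x + \<beta> * E 0 x) = h" using D0 E0 h by simp
  next
    fix j x assume "Suc j < k"
    then show "((\<lambda>x. \<alpha> * D j x + \<beta> * E j x) has_real_derivative \<alpha> * D (Suc j) x + \<beta> * E (Suc j) x) (at x)"
      using Dd Ed by (auto intro!: derivative_eq_intros)
  next
    fix a b :: real assume k: "1 \<le> k" and ab: "a \<le> b"
    have "((\<lambda>x. \<alpha> * D k x + \<beta> * E k x) has_integral
        (\<alpha> * (D (k - 1) b - D (k - 1) a) + \<beta> * (E (k - 1) b - E (k - 1) a))) {a..b}"
      using Di[OF k] Ei[OF k] ab by (intro has_integral_add has_integral_mult_right) auto
    thus "((\<lambda>x. \<alpha> * D k x + \<beta> * E k x) has_integral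
        (\<alpha> * D (k - 1) b + \<beta> * E (k - 1) b - (\<alpha> * D (k - 1) a + \<beta> * E (k - 1) a))) {a..b}"
      by (simp add: algebra_simps)
  next
    fix j assume j: "j \<le> k"
    show "(\<lambda>x. \<alpha> * D j x + \<beta> * E j x) \<in> borel_measurable lborel" using Dm[OF j] Em[OF j] by measurable
    show "integrable lborel (\<lambda>x. (\<alpha> * D j x + \<beta> * E j x)\<^sup>2)"
    proof (rule Bochner_Integration.integrable_bound[of lborel "\<lambda>x. 2*\<alpha>\<^sup>2*(D j x)\<^sup>2 + 2*\<beta>\<^sup>2*(E j x)\<^sup>2"])
      show "integrable lborel (\<lambda>x. 2*\<alpha>\<^sup>2*(D j x)\<^sup>2 + 2*\<beta>\<^sup>2*(E j x)\<^sup>2)"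
        using Dl[OF j] El[OF j] by (intro Bochner_Integration.integrable_add Bochner_Integration.integrable_mult_right)
      show "(\<lambda>x. (\<alpha> * D j x + \<beta> * E j x)\<^sup>2) \<in> borel_measurable lborel" using Dm[OF j] Em[OF j] by measurable
      show "AE x in lborel. norm ((\<alpha> * D j x + \<beta> * E j x)\<^sup>2) \<le> norm (2*\<alpha>\<^sup>2*(D j x)\<^sup>2 + 2*\<beta>\<^sup>2*(E j x)\<^sup>2)"
        using sq_comb_le by (auto simp: mult.assoc)
    qed
  qed
qed

lemma sob_4_3: assumes "sob_derivs 4 f D" shows "sob_derivs 3 f D"
proof -
  have d: "\<And>j x. Suc j < 4 \<Longrightarrow> (D j has_real_derivative D (Suc j) x) (at x)" using assms unfolding sob_derivs_def by auto
  have "(D 3 has_integral (D 2 b - D 2 a)) {a..b}" if "a \<le> b" for a b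
    using deriv_has_integral[OF d that] by (simp add: numeral_eq_Suc)
  thus ?thesis using assms unfolding sob_derivs_def by (auto simp: numeral_eq_Suc)
qed

lemma sob_some: "sobolev k f \<Longrightarrow> sob_derivs k f (SOME D. sob_derivs k f D)"
  unfolding sobolev_def using someI_ex[of "sob_derivs k f"] by simp

lemma hnorm_sq: "sobolev k f \<Longrightarrow> (hnorm k f)\<^sup>2 = (\<Sum>j\<le>k. LINT x|lborel. ((SOME D. sob_derivs k f D) j x)\<^sup>2)"
  unfolding hnorm_def by (subst real_sqrt_pow2) (auto intro!: sum_nonneg)

lemma sob_has_int:
  assumes "sob_derivs k f D" "Suc j \<le> k" "a \<le> b"
  shows "(D (Suc j) has_integral (D j b - D j a)) {a..b}"
proof (cases "Suc j < k")
  case True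
  hence "\<And>x. (D j has_real_derivative D (Suc j) x) (at x)" using assms(1) unfolding sob_derivs_def by auto
  then show ?thesis using deriv_has_integral assms(3) by blast
next
  case False
  hence "k = Suc j" using assms(2) by auto
  then show ?thesis using assms(1,3) unfolding sob_derivs_def by auto
qed

lemma sob_sup:
  assumes D: "sob_derivs k f D" and j: "Suc j \<le> k" and e: "e > 0"
  shows "\<bar>D j x\<bar> \<le> e + (\<Sum>i\<le>k. LINT y|lborel. (D i y)\<^sup>2) / (2*e)"
proof -
  have l: "\<And>i. i \<le> k \<Longrightarrow> integrable lborel (\<lambda>x. (D i x)\<^sup>2)" using D unfolding sob_derivs_def by auto
  have "\<bar>D j x\<bar> \<le> e + (integral UNIV (\<lambda>x. (D j x)\<^sup>2) + integral UNIV (\<lambda>x. (D (Suc j) x)\<^sup>2)) / (2*e)"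
    by (rule sob_embed[OF sob_has_int[OF D j] integrable_on_lborel integrable_on_lborel e]) (use l j in auto)
  also have "integral UNIV (\<lambda>x. (D j x)\<^sup>2) + integral UNIV (\<lambda>x. (D (Suc j) x)\<^sup>2)
      = (\<Sum>i\<in>{j, Suc j}. LINT y|lborel. (D i y)\<^sup>2)"
    using l j by (simp add: integral_lborel)
  also have "\<dots> \<le> (\<Sum>i\<le>k. LINT y|lborel. (D i y)\<^sup>2)"
    by (rule sum_mono2) (use j in auto)
  finally show ?thesis using e by (smt (verit) divide_right_mono)
qed

lemma hnorm_sup:
  assumes "sobolev k f" "Suc j \<le> k" "e > 0"
  shows "\<bar>(SOME D. sob_derivs k f D) j x\<bar> \<le> e + (hnorm k f)\<^sup>2 / (2*e)"
  using sob_sup[OF sob_some[OF assms(1)] assms(2,3)] hnorm_sq[OF assms(1)] by simp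



lemma deriv_from_upper:
  fixes f F :: "real \<Rightarrow> real"
  assumes fc: "continuous_on {a..b} f" and x: "a < x" "x < b"
    and F: "\<And>y. y \<in> {a<..<b} \<Longrightarrow> F y = c + integral {a..y} f"
  shows "(F has_real_derivative f x) (at x)"
proof -
  have "((\<lambda>y. integral {a..y} f) has_vector_derivative f x) (at x within {a..b})"
    by (rule integral_has_vector_derivative[OF fc]) (use x in auto)
  hence "((\<lambda>y. integral {a..y} f) has_vector_derivative f x) (at x within {a<..<b})"
    by (rule has_vector_derivative_within_subset) auto
  hence "((\<lambda>y. integral {a..y} f) has_vector_derivative f x) (at x)"
    using has_vector_derivative_within_open[of x "{a<..<b}"] x by auto
  hence "((\<lambda>y. c + integral {a..y} f) has_real_derivative f x) (at x)"
    by (auto simp: has_real_derivative_iff_has_vector_derivative[symmetric] intro!: derivative_eq_intros)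
  thus ?thesis
    by (rule has_field_derivative_transform_within_open[where S="{a<..<b}"]) (use x F in auto)
qed

lemma deriv_from_lower:
  fixes f F :: "real \<Rightarrow> real"
  assumes fc: "continuous_on {a..b} f" and x: "a < x" "x < b"
    and F: "\<And>y. y \<in> {a<..<b} \<Longrightarrow> F y = c + integral {y..b} f"
  shows "(F has_real_derivative - f x) (at x)"
proof -
  have "((\<lambda>y. integral {y..b} f) has_vector_derivative - f x) (at x within {a..b})"
    by (rule integral_has_vector_derivative'[OF fc]) (use x in auto)
  hence "((\<lambda>y. integral {y..b} f) has_vector_derivative - f x) (at x within {a<..<b})"
    by (rule has_vector_derivative_within_subset) auto
  hence "((\<lambda>y. integral {y..b} f) has_vector_derivative - f x) (at x)"
    using has_vector_derivative_within_open[of x "{a<..<b}"] x by auto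
  hence "((\<lambda>y. c + integral {y..b} f) has_real_derivative - f x) (at x)"
    by (auto simp: has_real_derivative_iff_has_vector_derivative[symmetric] intro!: derivative_eq_intros)
  thus ?thesis
    by (rule has_field_derivative_transform_within_open[where S="{a<..<b}"]) (use x F in auto)
qed

context
  fixes w :: "real \<Rightarrow> real"
  assumes wm: "w \<in> borel_measurable lborel" and wi: "integrable lborel w"
    and wc: "continuous_on UNIV w" and wn: "\<And>x. 0 \<le> w x"
begin

lemma setint_A: "set_integrable lborel {..y} (\<lambda>z. exp z * w z)"
  unfolding set_integrable_def
proof (rule Bochner_Integration.integrable_bound[of lborel "\<lambda>z. exp y * w z"])
  show "integrable lborel (\<lambda>z. exp y * w z)" using wi by (rule Bochner_Integration.integrable_mult_right)
  show "(\<lambda>x. indicator {..y} x *\<^sub>R (exp x * w x)) \<in> borel_measurable lborel" using wm by measurable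
  show "AE x in lborel. norm (indicator {..y} x *\<^sub>R (exp x * w x)) \<le> norm (exp y * w x)"
    using wn by (auto simp: indicator_def abs_mult intro!: mult_right_mono)
qed

lemma setint_B: "set_integrable lborel {y<..} (\<lambda>z. exp (-z) * w z)"
  unfolding set_integrable_def
proof (rule Bochner_Integration.integrable_bound[of lborel "\<lambda>z. exp (-y) * w z"])
  show "integrable lborel (\<lambda>z. exp (-y) * w z)" using wi by (rule Bochner_Integration.integrable_mult_right)
  show "(\<lambda>x. indicator {y<..} x *\<^sub>R (exp (-x) * w x)) \<in> borel_measurable lborel" using wm by measurable
  show "AE x in lborel. norm (indicator {y<..} x *\<^sub>R (exp (-x) * w x)) \<le> norm (exp (-y) * w x)"
    using wn by (auto simp: indicator_def abs_mult intro!: mult_right_mono)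
qed

lemma Aint: "(\<lambda>z. exp z * w z) integrable_on {..y}"
  using set_borel_integral_eq_integral(1)[OF setint_A] .

lemma negl_diff1: "negligible {x \<in> {(y::real)<..} - {y..}. f x \<noteq> (0::real)}"
  by (rule negligible_subset[OF negligible_sing[of y]]) auto
lemma negl_diff2: "negligible {x \<in> {(y::real)..} - {y<..}. f x \<noteq> (0::real)}"
  by (rule negligible_subset[OF negligible_sing[of y]]) auto
lemmas negl_diff = negl_diff1 negl_diff2

lemma Bint: "(\<lambda>z. exp (-z) * w z) integrable_on {y..}"
  using integrable_spike_set[OF set_borel_integral_eq_integral(1)[OF setint_B] negl_diff] .

lemma wcont: "continuous_on S (\<lambda>z. exp z * w z)" "continuous_on S (\<lambda>z. exp (-z) * w z)"
  using wc by (auto intro!: continuous_intros intro: continuous_on_subset)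

definition "cA y = integral {..y} (\<lambda>z. exp z * w z)"
definition "cB y = integral {y..} (\<lambda>z. exp (-z) * w z)"

lemma P_split: "(LINT z|lborel. G (y - z) * w z) = (exp (-y) * cA y + exp y * cB y) / 2"
proof -
  have pw: "G (y - z) * w z = exp (-y)/2 * (indicator {..y} z *\<^sub>R (exp z * w z))
       + exp y / 2 * (indicator {y<..} z *\<^sub>R (exp (-z) * w z))" for z
    by (auto simp: G_def indicator_def abs_if mult_exp_exp)
  have i1: "integrable lborel (\<lambda>z. indicator {..y} z *\<^sub>R (exp z * w z))"
    using setint_A unfolding set_integrable_def .
  have i2: "integrable lborel (\<lambda>z. indicator {y<..} z *\<^sub>R (exp (-z) * w z))"
    using setint_B unfolding set_integrable_def .
  have "(LINT z|lborel. G (y - z) * w z) = exp (-y)/2 * (LINT z:{..y}|lborel. exp z * w z)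
        + exp y / 2 * (LINT z:{y<..}|lborel. exp (-z) * w z)"
    unfolding pw set_lebesgue_integral_def
    using i1 i2 by (simp add: Bochner_Integration.integral_add)
  also have "(LINT z:{..y}|lborel. exp z * w z) = cA y"
    unfolding cA_def by (rule set_borel_integral_eq_integral(2)[OF setint_A])
  also have "(LINT z:{y<..}|lborel. exp (-z) * w z) = cB y"
    unfolding cB_def set_borel_integral_eq_integral(2)[OF setint_B] by (rule integral_spike_set[OF negl_diff])
  finally show ?thesis by simp
qed

lemma cA_deriv: "(cA has_real_derivative exp x * w x) (at x)"
proof (rule deriv_from_upper[where a="x - 1" and b="x + 1" and c="cA (x - 1)"])
  show "continuous_on {x - 1..x + 1} (\<lambda>z. exp z * w z)" by (rule wcont)
  fix y assume y: "y \<in> {x - 1<..<x + 1}"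
  have "{..y} = {..x - 1} \<union> {x - 1..y}" using y by auto
  moreover have "integral ({..x - 1} \<union> {x - 1..y}) (\<lambda>z. exp z * w z) = cA (x - 1) + integral {x - 1..y} (\<lambda>z. exp z * w z)"
    unfolding cA_def
    by (rule integral_Un[OF Aint integrable_continuous_interval[OF wcont(1)]])
       (auto intro: negligible_subset[OF negligible_sing[of "x - 1"]])
  ultimately show "cA y = cA (x - 1) + integral {x - 1..y} (\<lambda>z. exp z * w z)" unfolding cA_def by simp
qed auto

lemma cB_deriv: "(cB has_real_derivative - (exp (-x) * w x)) (at x)"
proof (rule deriv_from_lower[where a="x - 1" and b="x + 1" and c="cB (x + 1)"])
  show "continuous_on {x - 1..x + 1} (\<lambda>z. exp (-z) * w z)" by (rule wcont)
  fix y assume y: "y \<in> {x - 1<..<x + 1}"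
  have "{y..} = {y..x + 1} \<union> {x + 1..}" using y by auto
  moreover have "integral ({y..x + 1} \<union> {x + 1..}) (\<lambda>z. exp (-z) * w z) = integral {y..x+1} (\<lambda>z. exp (-z) * w z) + cB (x + 1)"
    unfolding cB_def
    by (rule integral_Un[OF integrable_continuous_interval[OF wcont(2)] Bint])
       (auto intro: negligible_subset[OF negligible_sing[of "x + 1"]])
  ultimately show "cB y = cB (x + 1) + integral {y..x + 1} (\<lambda>z. exp (-z) * w z)" unfolding cB_def by simp
qed auto

definition "cP1 y = (exp y * cB y - exp (-y) * cA y) / 2"

lemma P_deriv: "((\<lambda>y. LINT z|lborel. G (y - z) * w z) has_real_derivative cP1 x) (at x)"
proof -
  have "((\<lambda>y. (exp (-y) * cA y + exp y * cB y) / 2) has_real_derivative cP1 x) (at x)"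
    unfolding cP1_def
    by ((rule derivative_eq_intros cA_deriv cB_deriv refl | simp)+; simp add: field_simps exp_minus)
  thus ?thesis by (simp add: P_split)
qed

lemma P1_deriv: "(cP1 has_real_derivative (LINT z|lborel. G (x - z) * w z) - w x) (at x)"
proof -
  have "((\<lambda>y. (exp y * cB y - exp (-y) * cA y) / 2) has_real_derivative (exp (-x) * cA x + exp x * cB x) / 2 - w x) (at x)"
    by ((rule derivative_eq_intros cA_deriv cB_deriv refl | simp)+; simp add: field_simps exp_minus)
  thus ?thesis by (simp add: P_split cP1_def[abs_def])
qed

end



lemma joint_deriv:
  fixes F :: "real \<Rightarrow> real \<Rightarrow> real" and Ft :: "real \<Rightarrow> real"
  assumes unif: "\<And>e. e > 0 \<Longrightarrow> \<exists>d>0. \<forall>s x. \<bar>s - t0\<bar> < d \<longrightarrow> \<bar>F x s - F x t0 - Ft x * (s - t0)\<bar> \<le> e * \<bar>s - t0\<bar>"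
    and cont: "isCont Ft x0"
    and dx: "((\<lambda>x. F x t0) has_real_derivative Fx) (at x0)"
  shows "((\<lambda>p. F (fst p) (snd p)) has_derivative (\<lambda>h. fst h * Fx + snd h * Ft x0)) (at (x0, t0))"
  unfolding has_derivative_at_alt
proof (intro conjI allI impI)
  show "bounded_linear (\<lambda>h::real\<times>real. fst h * Fx + snd h * Ft x0)"
    by (rule bounded_linear_add[OF bounded_linear_compose[OF bounded_linear_mult_left bounded_linear_fst]
                                   bounded_linear_compose[OF bounded_linear_mult_left bounded_linear_snd]])
  fix e :: real assume e: "e > 0"
  obtain d1 where d1: "d1 > 0" "\<And>s x. \<bar>s - t0\<bar> < d1 \<Longrightarrow> \<bar>F x s - F x t0 - Ft x * (s - t0)\<bar> \<le> e/3 * \<bar>s - t0\<bar>"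
    using unif[of "e/3"] e by auto
  obtain d2 where d2: "d2 > 0" "\<And>x. \<bar>x - x0\<bar> < d2 \<Longrightarrow> \<bar>Ft x - Ft x0\<bar> < e/3"
    using cont e unfolding continuous_at_eps_delta by (metis dist_real_def zero_less_divide_iff zero_less_numeral)
  have "((\<lambda>x. F x t0) has_derivative (\<lambda>h. h * Fx)) (at x0)"
    using dx by (simp add: has_field_derivative_def mult.commute[of _ Fx])
  then obtain d3 where d3: "d3 > 0" "\<And>x. \<bar>x - x0\<bar> < d3 \<Longrightarrow> \<bar>F x t0 - F x0 t0 - (x - x0) * Fx\<bar> \<le> e/3 * \<bar>x - x0\<bar>"
    unfolding has_derivative_at_alt using e by (metis real_norm_def zero_less_divide_iff zero_less_numeral)
  show "\<exists>d>0. \<forall>y. norm (y - (x0, t0)) < d \<longrightarrow>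
      norm (F (fst y) (snd y) - F (fst (x0, t0)) (snd (x0, t0)) - (fst (y - (x0, t0)) * Fx + snd (y - (x0, t0)) * Ft x0))
      \<le> e * norm (y - (x0, t0))"
  proof (intro exI[of _ "min d1 (min d2 d3)"] conjI allI impI)
    show "min d1 (min d2 d3) > 0" using d1 d2 d3 by auto
    fix y :: "real \<times> real" assume y: "norm (y - (x0, t0)) < min d1 (min d2 d3)"
    obtain x s where ys: "y = (x, s)" by (cases y)
    have nx: "\<bar>x - x0\<bar> \<le> norm (y - (x0, t0))" using norm_fst_le[of "x - x0" "s - t0"] ys by simp
    have ns: "\<bar>s - t0\<bar> \<le> norm (y - (x0, t0))" using norm_snd_le[of "s - t0" "x - x0"] ys by simp
    have h1: "\<bar>F x s - F x t0 - Ft x * (s - t0)\<bar> \<le> e/3 * \<bar>s - t0\<bar>" using d1(2)[of s x] y ns by (smt (verit) min_less_iff_conj)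
    have h2: "\<bar>Ft x - Ft x0\<bar> \<le> e/3" proof -
      have "\<bar>x - x0\<bar> < d2" using y nx by (smt (verit) min_less_iff_conj)
      thus ?thesis using d2(2)[of x] by linarith
    qed
    have h2': "\<bar>(Ft x - Ft x0) * (s - t0)\<bar> \<le> e/3 * \<bar>s - t0\<bar>"
      unfolding abs_mult by (rule mult_right_mono[OF h2]) auto
    have h3: "\<bar>F x t0 - F x0 t0 - (x - x0) * Fx\<bar> \<le> e/3 * \<bar>x - x0\<bar>" using d3(2)[of x] y nx by (smt (verit) min_less_iff_conj)
    have "\<bar>F x s - F x0 t0 - ((x - x0) * Fx + (s - t0) * Ft x0)\<bar>
        \<le> \<bar>F x s - F x t0 - Ft x * (s - t0)\<bar> + \<bar>(Ft x - Ft x0) * (s - t0)\<bar> + \<bar>F x t0 - F x0 t0 - (x - x0) * Fx\<bar>"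
    proof -
      have eq: "F x s - F x0 t0 - ((x - x0) * Fx + (s - t0) * Ft x0) = (F x s - F x t0 - Ft x * (s - t0)) + (Ft x - Ft x0) * (s - t0) + (F x t0 - F x0 t0 - (x - x0) * Fx)"
        by (simp add: algebra_simps)
      show ?thesis unfolding eq by (rule order_trans[OF abs_triangle_ineq add_right_mono[OF abs_triangle_ineq]])
    qed
    also have "\<dots> \<le> e/3 * \<bar>s - t0\<bar> + e/3 * \<bar>s - t0\<bar> + e/3 * \<bar>x - x0\<bar>" using h1 h2' h3 by linarith
    also have "\<dots> \<le> e * norm (y - (x0, t0))"
    proof -
      have "e/3 * \<bar>s - t0\<bar> \<le> e/3 * norm (y - (x0, t0))" using ns e by (intro mult_left_mono) auto
      moreover have "e/3 * \<bar>x - x0\<bar> \<le> e/3 * norm (y - (x0, t0))" using nx e by (intro mult_left_mono) auto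
      ultimately show ?thesis by linarith
    qed
    finally show "norm (F (fst y) (snd y) - F (fst (x0, t0)) (snd (x0, t0)) - (fst (y - (x0, t0)) * Fx + snd (y - (x0, t0)) * Ft x0))
      \<le> e * norm (y - (x0, t0))" using ys by simp
  qed
qed



lemma forms_pointwise:
  fixes u :: "real \<Rightarrow> real \<Rightarrow> real" and a b c :: "real \<times> real \<Rightarrow> real" and q :: "real \<times> real"
  assumes HM: "(mm u has_derivative (\<lambda>h. fst h * Mx + snd h * Mt)) (at q)"
    and HF: "(FF u has_derivative (\<lambda>h. fst h * Fx + snd h * Ft)) (at q)"
    and rel: "Fx - Mt = -2 * FF u q"
    and Ha: "(a has_derivative (\<lambda>h. fst h * ax)) (at q)"
    and Hb: "(b has_derivative (\<lambda>h. fst h * bx)) (at q)"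
    and Hc: "(c has_derivative (\<lambda>h. fst h * cx)) (at q)"
    and ode1: "ax + \<mu>*bx = 2*a q + 4*\<mu>*b q - 2*c q"
    and ode2: "bx + \<mu>*cx = -2*\<mu>*a q + 4*b q + 2*\<mu>*c q"
    and gauss: "a q * c q - (b q)\<^sup>2 = -1"
    and sig: "\<sigma> = 1 \<or> \<sigma> = -1"
  defines "\<omega>1 \<equiv> om1 u" and "\<omega>2 \<equiv> om2 u \<mu> \<sigma>" and "\<omega>12 \<equiv> om3 u \<mu> \<sigma>"
    and "\<omega>13 \<equiv> form_add (form_scale a (om1 u)) (form_scale b (om2 u \<mu> \<sigma>))"
    and "\<omega>23 \<equiv> form_add (form_scale b (om1 u)) (form_scale c (om2 u \<mu> \<sigma>))"
  shows "\<exists>f' g'. (fst \<omega>1 has_derivative f') (at q) \<and> (snd \<omega>1 has_derivative g') (at q) \<and>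
            wedge \<omega>12 \<omega>2 q = g' (1, 0) - f' (0, 1)"
    and "\<exists>f' g'. (fst \<omega>2 has_derivative f') (at q) \<and> (snd \<omega>2 has_derivative g') (at q) \<and>
            wedge \<omega>1 \<omega>12 q = g' (1, 0) - f' (0, 1)"
    and "wedge \<omega>1 \<omega>13 q + wedge \<omega>2 \<omega>23 q = 0"
    and "\<exists>f' g'. (fst \<omega>12 has_derivative f') (at q) \<and> (snd \<omega>12 has_derivative g') (at q) \<and>
            - wedge \<omega>13 \<omega>23 q = g' (1, 0) - f' (0, 1)"
    and "\<exists>f' g'. (fst \<omega>13 has_derivative f') (at q) \<and> (snd \<omega>13 has_derivative g') (at q) \<and>
            wedge \<omega>12 \<omega>23 q = g' (1, 0) - f' (0, 1)"
    and "\<exists>f' g'. (fst \<omega>23 has_derivative f') (at q) \<and> (snd \<omega>23 has_derivative g') (at q) \<and>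
            - wedge \<omega>12 \<omega>13 q = g' (1, 0) - f' (0, 1)"
proof -
  define s where "s = sqrt (1 + \<mu>\<^sup>2)"
  have s2: "s * s = 1 + \<mu>\<^sup>2" unfolding s_def by (simp add: add_pos_nonneg)
  have sg2: "\<sigma> * \<sigma> = 1" using sig by auto
  define m where "m = mm u q"
  define F where "F = FF u q"
  have rel': "Fx = Mt - 2 * F" using rel unfolding F_def by simp
  have fst1: "fst \<omega>1 = mm u" and snd1: "snd \<omega>1 = FF u" unfolding \<omega>1_def om1_def by auto
  have fst2: "fst \<omega>2 = (\<lambda>p. \<mu> * mm u p + \<sigma> * 2 * s)" and snd2: "snd \<omega>2 = (\<lambda>p. \<mu> * FF u p)"
    unfolding \<omega>2_def om2_def s_def by auto
  have fst12: "fst \<omega>12 = (\<lambda>p. \<sigma> * s * mm u p + 2 * \<mu>)" and snd12: "snd \<omega>12 = (\<lambda>p. \<sigma> * s * FF u p)"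
    unfolding \<omega>12_def om3_def s_def by auto
  have fst13: "fst \<omega>13 = (\<lambda>p. a p * mm u p + b p * (\<mu> * mm u p + \<sigma> * 2 * s))"
    and snd13: "snd \<omega>13 = (\<lambda>p. a p * FF u p + b p * (\<mu> * FF u p))"
    unfolding \<omega>13_def form_add_def form_scale_def fst1[unfolded \<omega>1_def] snd1[unfolded \<omega>1_def] fst2[unfolded \<omega>2_def] snd2[unfolded \<omega>2_def] by auto
  have fst23: "fst \<omega>23 = (\<lambda>p. b p * mm u p + c p * (\<mu> * mm u p + \<sigma> * 2 * s))"
    and snd23: "snd \<omega>23 = (\<lambda>p. b p * FF u p + c p * (\<mu> * FF u p))"
    unfolding \<omega>23_def form_add_def form_scale_def fst1[unfolded \<omega>1_def] snd1[unfolded \<omega>1_def] fst2[unfolded \<omega>2_def] snd2[unfolded \<omega>2_def] by auto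
  have w: "wedge \<omega> \<eta> q = fst \<omega> q * snd \<eta> q - snd \<omega> q * fst \<eta> q" for \<omega> \<eta> unfolding wedge_def ..
  have HM2: "((\<lambda>p. \<mu> * mm u p + \<sigma> * 2 * s) has_derivative (\<lambda>h. \<mu> * (fst h * Mx + snd h * Mt))) (at q)"
    by (rule has_derivative_add_const[OF has_derivative_mult_right[OF HM]])
  have HF2: "((\<lambda>p. \<mu> * FF u p) has_derivative (\<lambda>h. \<mu> * (fst h * Fx + snd h * Ft))) (at q)"
    by (rule has_derivative_mult_right[OF HF])
  show "\<exists>f' g'. (fst \<omega>1 has_derivative f') (at q) \<and> (snd \<omega>1 has_derivative g') (at q) \<and>
            wedge \<omega>12 \<omega>2 q = g' (1, 0) - f' (0, 1)"
    apply (intro exI conjI)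
      apply (unfold fst1 snd1, rule HM, rule HF)
    unfolding w fst12 snd12 fst2 snd2 using rel' s2 sg2 unfolding F_def m_def by simp algebra
  show "\<exists>f' g'. (fst \<omega>2 has_derivative f') (at q) \<and> (snd \<omega>2 has_derivative g') (at q) \<and>
            wedge \<omega>1 \<omega>12 q = g' (1, 0) - f' (0, 1)"
    apply (intro exI conjI)
      apply (unfold fst2 snd2, rule HM2, rule HF2)
    unfolding w fst12 snd12 fst1 snd1 using rel' unfolding F_def m_def by (simp add: rel'[unfolded F_def] algebra_simps)
  show "wedge \<omega>1 \<omega>13 q + wedge \<omega>2 \<omega>23 q = 0"
    unfolding w fst1 snd1 fst2 snd2 fst13 snd13 fst23 snd23 by (simp add: algebra_simps)
  show "\<exists>f' g'. (fst \<omega>12 has_derivative f') (at q) \<and> (snd \<omega>12 has_derivative g') (at q) \<and>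
            - wedge \<omega>13 \<omega>23 q = g' (1, 0) - f' (0, 1)"
    apply (intro exI conjI)
      apply (unfold fst12 snd12, rule has_derivative_add_const[OF has_derivative_mult_right[OF HM]], rule has_derivative_mult_right[OF HF])
    unfolding w fst13 snd13 fst23 snd23 using rel' s2 sg2 gauss unfolding F_def m_def by simp algebra
  show "\<exists>f' g'. (fst \<omega>13 has_derivative f') (at q) \<and> (snd \<omega>13 has_derivative g') (at q) \<and>
            wedge \<omega>12 \<omega>23 q = g' (1, 0) - f' (0, 1)"
    apply (intro exI conjI)
      apply (unfold fst13 snd13, rule has_derivative_add[OF has_derivative_mult[OF Ha HM] has_derivative_mult[OF Hb HM2]],
             rule has_derivative_add[OF has_derivative_mult[OF Ha HF] has_derivative_mult[OF Hb HF2]])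
    unfolding w fst12 snd12 fst23 snd23 using rel' s2 sg2 ode1 unfolding F_def m_def by simp algebra
  show "\<exists>f' g'. (fst \<omega>23 has_derivative f') (at q) \<and> (snd \<omega>23 has_derivative g') (at q) \<and>
            - wedge \<omega>12 \<omega>13 q = g' (1, 0) - f' (0, 1)"
    apply (intro exI conjI)
      apply (unfold fst23 snd23, rule has_derivative_add[OF has_derivative_mult[OF Hb HM] has_derivative_mult[OF Hc HM2]],
             rule has_derivative_add[OF has_derivative_mult[OF Hb HF] has_derivative_mult[OF Hc HF2]])
    unfolding w fst12 snd12 fst13 snd13 using rel' s2 sg2 ode2 unfolding F_def m_def by simp algebra
qed



definition zeta :: "real \<Rightarrow> real \<Rightarrow> real" where
  "zeta x0 x = sqrt (exp (4 * (x - x0)) - 1)"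

lemma zeta_pos: "x > x0 \<Longrightarrow> zeta x0 x > 0"
  unfolding zeta_def by simp

lemma zeta_sq: "x > x0 \<Longrightarrow> zeta x0 x * zeta x0 x = exp (4 * (x - x0)) - 1"
  unfolding zeta_def by (simp add: less_imp_le)

lemma zeta_deriv: "x > x0 \<Longrightarrow> (zeta x0 has_real_derivative 2 * zeta x0 x + 2 * inverse (zeta x0 x)) (at x)"
proof -
  assume x: "x > x0"
  have pos: "exp (4 * (x - x0)) - 1 > 0" using x by simp
  have "((\<lambda>x. sqrt (exp (4 * (x - x0)) - 1)) has_real_derivative
        inverse (sqrt (exp (4 * (x - x0)) - 1)) / 2 * (exp (4 * (x - x0)) * 4)) (at x)"
    by (rule DERIV_real_sqrt[THEN DERIV_chain2]) (use pos in \<open>auto intro!: derivative_eq_intros\<close>)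
  moreover have "inverse (zeta x0 x) / 2 * (exp (4 * (x - x0)) * 4) = 2 * zeta x0 x + 2 * inverse (zeta x0 x)"
    using zeta_sq[OF x] zeta_pos[OF x] by (simp add: field_simps)
  ultimately show ?thesis unfolding zeta_def by simp
qed

inductive_set LPs :: "real \<Rightarrow> (real \<Rightarrow> real) set" for x0 :: real where
  LP_const: "(\<lambda>x. c) \<in> LPs x0"
| LP_zeta: "zeta x0 \<in> LPs x0"
| LP_inv: "(\<lambda>x. inverse (zeta x0 x)) \<in> LPs x0"
| LP_add: "f \<in> LPs x0 \<Longrightarrow> g \<in> LPs x0 \<Longrightarrow> (\<lambda>x. f x + g x) \<in> LPs x0"
| LP_mult: "f \<in> LPs x0 \<Longrightarrow> g \<in> LPs x0 \<Longrightarrow> (\<lambda>x. f x * g x) \<in> LPs x0"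

lemma LP_cmult: "f \<in> LPs x0 \<Longrightarrow> (\<lambda>x. c * f x) \<in> LPs x0"
  using LP_mult[OF LP_const] by blast

lemma LPs_deriv: "f \<in> LPs x0 \<Longrightarrow> \<exists>f'\<in>LPs x0. \<forall>x>x0. (f has_real_derivative f' x) (at x)"
proof (induction rule: LPs.induct)
  case (LP_const c)
  show ?case by (rule bexI[of _ "\<lambda>x. 0"]) (auto intro: LPs.LP_const)
next
  case LP_zeta
  show ?case
    by (rule bexI[of _ "\<lambda>x. 2 * zeta x0 x + 2 * inverse (zeta x0 x)"])
       (auto intro: zeta_deriv LPs.LP_add[OF LP_cmult[OF LPs.LP_zeta] LP_cmult[OF LPs.LP_inv]])
next
  case LP_inv
  have "((\<lambda>x. inverse (zeta x0 x)) has_real_derivative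
      (-2) * inverse (zeta x0 x) + (-2) * (inverse (zeta x0 x) * (inverse (zeta x0 x) * inverse (zeta x0 x)))) (at x)"
    if x: "x > x0" for x
  proof -
    have "((\<lambda>x. inverse (zeta x0 x)) has_real_derivative
        - ((2 * zeta x0 x + 2 * inverse (zeta x0 x)) * inverse (zeta x0 x ^ Suc (Suc 0)))) (at x)"
      by (rule DERIV_inverse_fun[OF zeta_deriv[OF x]]) (use zeta_pos[OF x] in auto)
    moreover have "- ((2 * zeta x0 x + 2 * inverse (zeta x0 x)) * inverse (zeta x0 x ^ Suc (Suc 0)))
       = (-2) * inverse (zeta x0 x) + (-2) * (inverse (zeta x0 x) * (inverse (zeta x0 x) * inverse (zeta x0 x)))"
      using zeta_pos[OF x] by (simp add: field_simps)
    ultimately show ?thesis by simp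
  qed
  then show ?case
    apply (intro bexI[of _ "\<lambda>x. (-2) * inverse (zeta x0 x) + (-2) * (inverse (zeta x0 x) * (inverse (zeta x0 x) * inverse (zeta x0 x)))"])
     apply blast
    by (rule LPs.LP_add[OF LP_cmult[OF LPs.LP_inv] LP_cmult[OF LPs.LP_mult[OF LPs.LP_inv LPs.LP_mult[OF LPs.LP_inv LPs.LP_inv]]]])
next
  case (LP_add f g)
  then obtain f' g' where "f' \<in> LPs x0" "g' \<in> LPs x0" "\<forall>x>x0. (f has_real_derivative f' x) (at x)"
    "\<forall>x>x0. (g has_real_derivative g' x) (at x)" by blast
  then show ?case
    by (intro bexI[of _ "\<lambda>x. f' x + g' x"]) (auto intro: LPs.LP_add derivative_intros)
next
  case (LP_mult f g)
  then obtain f' g' where "f' \<in> LPs x0" "g' \<in> LPs x0" "\<forall>x>x0. (f has_real_derivative f' x) (at x)"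
    "\<forall>x>x0. (g has_real_derivative g' x) (at x)" by blast
  moreover note LP_mult.hyps
  ultimately show ?case
    by (intro bexI[of _ "\<lambda>x. f' x * g x + g' x * f x"]) (auto intro: LPs.LP_add LPs.LP_mult DERIV_mult)
qed

definition der :: "real \<Rightarrow> (real \<Rightarrow> real) \<Rightarrow> (real \<Rightarrow> real)" where
  "der x0 f = (SOME f'. f' \<in> LPs x0 \<and> (\<forall>x>x0. (f has_real_derivative f' x) (at x)))"

lemma der_prop: "f \<in> LPs x0 \<Longrightarrow> der x0 f \<in> LPs x0 \<and> (\<forall>x>x0. (f has_real_derivative der x0 f x) (at x))"
proof -
  assume f: "f \<in> LPs x0"
  have "\<exists>f'. f' \<in> LPs x0 \<and> (\<forall>x>x0. (f has_real_derivative f' x) (at x))" using LPs_deriv[OF f] by blast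
  from someI_ex[OF this] show ?thesis unfolding der_def .
qed

lemma iter_prop: "f \<in> LPs x0 \<Longrightarrow> (der x0 ^^ n) f \<in> LPs x0"
  by (induction n) (auto dest: der_prop)

lemma fst_deriv:
  assumes "(g has_real_derivative d) (at (fst p))"
  shows "((\<lambda>q. g (fst q)) has_derivative (\<lambda>h. fst h * d + snd h * 0)) (at p)"
proof -
  have "((\<lambda>q. g (fst q)) has_derivative (\<lambda>h. d * fst h)) (at p)"
    using has_derivative_compose[OF has_derivative_fst[OF has_derivative_ident] assms[unfolded has_field_derivative_def]]
    by simp
  then show ?thesis by (rule has_derivative_eq_rhs) (auto simp: mult.commute)
qed

lemma LPs_smooth:
  assumes f: "f \<in> LPs x0" and V: "\<forall>q\<in>V. fst q > x0"
  shows "smooth_on V (\<lambda>q. f (fst q))"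
  unfolding smooth_on_def
proof (intro exI[of _ "\<lambda>js. if (\<forall>b\<in>set js. b) then (\<lambda>q. (der x0 ^^ length js) f (fst q)) else (\<lambda>q. 0)"] conjI allI ballI)
  show "(if \<forall>b\<in>set []. b then \<lambda>q. (der x0 ^^ length []) f (fst q) else (\<lambda>q. 0)) = (\<lambda>q. f (fst q))" by simp
  fix js :: "bool list" and p assume p: "p \<in> V"
  show "((if \<forall>b\<in>set js. b then \<lambda>q. (der x0 ^^ length js) f (fst q) else (\<lambda>q. 0)) has_derivative
         (\<lambda>h. fst h * (if \<forall>b\<in>set (True # js). b then \<lambda>q. (der x0 ^^ length (True # js)) f (fst q) else (\<lambda>q. 0)) p +
              snd h * (if \<forall>b\<in>set (False # js). b then \<lambda>q. (der x0 ^^ length (False # js)) f (fst q) else (\<lambda>q. 0)) p))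
        (at p)"
  proof (cases "\<forall>b\<in>set js. b")
    case True
    have dd: "((der x0 ^^ length js) f has_real_derivative (der x0 ^^ Suc (length js)) f (fst p)) (at (fst p))"
      using der_prop[OF iter_prop[OF f, of "length js"]] V p by auto
    have t1: "\<forall>b\<in>set (True#js). b" and n2: "\<not>(\<forall>b\<in>set (False#js). b)" using True by auto
    from fst_deriv[OF dd] show ?thesis unfolding if_P[OF True] if_P[OF t1] if_not_P[OF n2] by simp
  next
    case False
    have n1: "\<not>(\<forall>b\<in>set (True#js). b)" "\<not>(\<forall>b\<in>set (False#js). b)" using False by auto
    show ?thesis unfolding if_not_P[OF False] if_not_P[OF n1(1)] if_not_P[OF n1(2)]
      by (rule has_derivative_eq_rhs[OF has_derivative_const]) auto
  qed
qed

lemma zinv_deriv: "x > x0 \<Longrightarrow> ((\<lambda>x. inverse (zeta x0 x)) has_real_derivative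
      (-2) * inverse (zeta x0 x) + (-2) * (inverse (zeta x0 x) * (inverse (zeta x0 x) * inverse (zeta x0 x)))) (at x)"
proof -
  assume x: "x > x0"
  have "((\<lambda>x. inverse (zeta x0 x)) has_real_derivative
        - ((2 * zeta x0 x + 2 * inverse (zeta x0 x)) * inverse (zeta x0 x ^ Suc (Suc 0)))) (at x)"
    by (rule DERIV_inverse_fun[OF zeta_deriv[OF x]]) (use zeta_pos[OF x] in auto)
  moreover have "- ((2 * zeta x0 x + 2 * inverse (zeta x0 x)) * inverse (zeta x0 x ^ Suc (Suc 0)))
     = (-2) * inverse (zeta x0 x) + (-2) * (inverse (zeta x0 x) * (inverse (zeta x0 x) * inverse (zeta x0 x)))"
    using zeta_pos[OF x] by (simp add: field_simps)
  ultimately show ?thesis by simp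
qed

definition "LPf \<alpha> \<beta> x0 = (\<lambda>x. \<alpha> * zeta x0 x + \<beta> * inverse (zeta x0 x))"

lemma LPf_LPs: "LPf \<alpha> \<beta> x0 \<in> LPs x0"
  unfolding LPf_def by (rule LPs.LP_add[OF LP_cmult[OF LPs.LP_zeta] LP_cmult[OF LPs.LP_inv]])

lemma LPf_deriv: "x > x0 \<Longrightarrow> (LPf \<alpha> \<beta> x0 has_real_derivative
    \<alpha> * (2 * zeta x0 x + 2 * inverse (zeta x0 x)) +
    \<beta> * ((-2) * inverse (zeta x0 x) + (-2) * (inverse (zeta x0 x) * (inverse (zeta x0 x) * inverse (zeta x0 x))))) (at x)"
  unfolding LPf_def by (intro DERIV_add DERIV_cmult zeta_deriv zinv_deriv)

definition "Aco \<mu> = (1 / (1 + \<mu>\<^sup>2), - (\<mu>\<^sup>2 / (1 + \<mu>\<^sup>2)))"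
definition "Bco \<mu> = (\<mu> / (1 + \<mu>\<^sup>2), \<mu> / (1 + \<mu>\<^sup>2))"
definition "Cco \<mu> = (\<mu>\<^sup>2 / (1 + \<mu>\<^sup>2), - (1 / (1 + \<mu>\<^sup>2)))"

definition "LPd \<alpha> \<beta> x0 x = \<alpha> * (2 * zeta x0 x + 2 * inverse (zeta x0 x)) +
    \<beta> * ((-2) * inverse (zeta x0 x) + (-2) * (inverse (zeta x0 x) * (inverse (zeta x0 x) * inverse (zeta x0 x))))"

lemma abc_odes:
  fixes \<mu> :: real
  assumes x: "x > x0"
  defines "A \<equiv> LPf (fst (Aco \<mu>)) (snd (Aco \<mu>)) x0" and "B \<equiv> LPf (fst (Bco \<mu>)) (snd (Bco \<mu>)) x0"
    and "C \<equiv> LPf (fst (Cco \<mu>)) (snd (Cco \<mu>)) x0"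
    and "A' \<equiv> LPd (fst (Aco \<mu>)) (snd (Aco \<mu>)) x0 x" and "B' \<equiv> LPd (fst (Bco \<mu>)) (snd (Bco \<mu>)) x0 x"
    and "C' \<equiv> LPd (fst (Cco \<mu>)) (snd (Cco \<mu>)) x0 x"
  shows "A' + \<mu> * B' = 2 * A x + 4 * \<mu> * B x - 2 * C x"
    and "B' + \<mu> * C' = -2 * \<mu> * A x + 4 * B x + 2 * \<mu> * C x"
    and "A x * C x - (B x)\<^sup>2 = -1"
proof -
  have z: "zeta x0 x > 0" using zeta_pos[OF x] .
  have k: "1 + \<mu>\<^sup>2 > 0" by (simp add: add_pos_nonneg)
  define zz where "zz = zeta x0 x"
  define ii where "ii = inverse (zeta x0 x)"
  define kv where "kv = inverse (1 + \<mu>\<^sup>2)"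
  have zi: "zz * ii = 1" using z unfolding zz_def ii_def by simp
  have ki: "(1 + \<mu>\<^sup>2) * kv = 1" using k unfolding kv_def by simp
  show "A' + \<mu> * B' = 2 * A x + 4 * \<mu> * B x - 2 * C x"
    unfolding A_def B_def C_def A'_def B'_def LPf_def LPd_def Aco_def Bco_def Cco_def
    unfolding divide_inverse fst_conv snd_conv ii_def[symmetric] kv_def[symmetric] unfolding zz_def[symmetric]
    by (simp add: algebra_simps power2_eq_square)
  show "B' + \<mu> * C' = -2 * \<mu> * A x + 4 * B x + 2 * \<mu> * C x"
    unfolding A_def B_def C_def B'_def C'_def LPf_def LPd_def Aco_def Bco_def Cco_def
    unfolding divide_inverse fst_conv snd_conv ii_def[symmetric] kv_def[symmetric] unfolding zz_def[symmetric]
    by (simp add: algebra_simps power2_eq_square)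
  have "A x * C x - (B x)\<^sup>2 = - (((1+\<mu>\<^sup>2)*kv)*((1+\<mu>\<^sup>2)*kv)*(zz*ii))"
    unfolding A_def B_def C_def LPf_def Aco_def Bco_def Cco_def
    unfolding divide_inverse fst_conv snd_conv ii_def[symmetric] kv_def[symmetric] unfolding zz_def[symmetric]
    by (simp add: algebra_simps power2_eq_square)
  then show "A x * C x - (B x)\<^sup>2 = -1" using zi ki by simp
qed



lemma isCont_of_int:
  fixes g g' :: "real \<Rightarrow> real"
  assumes hi: "\<And>a b. a \<le> b \<Longrightarrow> (g' has_integral (g b - g a)) {a..b}"
  shows "isCont g x"
proof -
  have gi: "g' integrable_on {x - 1..x + 1}" using hi[of "x - 1" "x + 1"] by auto
  have "continuous_on {x - 1..x + 1} (\<lambda>y. g (x - 1) + integral {x - 1..y} g')"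
    by (intro continuous_on_add continuous_on_const indefinite_integral_continuous_1 gi)
  moreover have "g (x - 1) + integral {x - 1..y} g' = g y" if "y \<in> {x - 1..x + 1}" for y
    using hi[of "x - 1" y] that by (simp add: integral_unique)
  ultimately have "continuous_on {x - 1..x + 1} g" by (rule continuous_on_eq)
  thus ?thesis by (rule continuous_on_interior) auto
qed

lemma chain_unique:
  assumes D: "sob_derivs k f D" and E: "sob_derivs k f E"
  shows "j < k \<Longrightarrow> D j = E j"
proof (induction j)
  case 0
  then show ?case using D E unfolding sob_derivs_def by auto
next
  case (Suc j)
  hence IH: "D j = E j" by auto
  show ?case
  proof
    fix x
    have "(D j has_real_derivative D (Suc j) x) (at x)" using D Suc.prems unfolding sob_derivs_def by auto
    moreover have "(D j has_real_derivative E (Suc j) x) (at x)" using E Suc.prems IH unfolding sob_derivs_def by auto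
    ultimately show "D (Suc j) x = E (Suc j) x" by (rule DERIV_unique)
  qed
qed

locale dpctx =
  fixes u v :: "real \<Rightarrow> real \<Rightarrow> real" and T :: ereal and I :: "real set"
  assumes I_def: "I = {t. 0 \<le> t \<and> ereal t < T}"
    and sobu: "\<And>t. t \<in> I \<Longrightarrow> sobolev 4 (\<lambda>x. u x t)"
    and sobv: "\<And>t. t \<in> I \<Longrightarrow> sobolev 3 (\<lambda>x. v x t)"
    and dq: "\<And>t. t \<in> I \<Longrightarrow> ((\<lambda>s. hnorm 3 (\<lambda>x. (u x s - u x t) / (s - t) - v x t)) \<longlongrightarrow> 0) (at t within I)"
    and eqn: "\<And>t x. t \<in> I \<Longrightarrow> v x t + u x t * deriv (\<lambda>y. u y t) x
               + 3/2 * deriv (\<lambda>y. LINT z|lborel. G (y - z) * (u z t)\<^sup>2) x = 0"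
begin

definition "Du t = (SOME D. sob_derivs 4 (\<lambda>x. u x t) D)"
definition "Dv t = (SOME D. sob_derivs 3 (\<lambda>x. v x t) D)"

lemma Du_sob: "t \<in> I \<Longrightarrow> sob_derivs 4 (\<lambda>x. u x t) (Du t)"
  unfolding Du_def by (rule sob_some[OF sobu])
lemma Dv_sob: "t \<in> I \<Longrightarrow> sob_derivs 3 (\<lambda>x. v x t) (Dv t)"
  unfolding Dv_def by (rule sob_some[OF sobv])
lemma Du0: "t \<in> I \<Longrightarrow> Du t 0 = (\<lambda>x. u x t)"
  using Du_sob unfolding sob_derivs_def by auto
lemma Dv0: "t \<in> I \<Longrightarrow> Dv t 0 = (\<lambda>x. v x t)"
  using Dv_sob unfolding sob_derivs_def by auto
lemma Du_d: "t \<in> I \<Longrightarrow> j < 3 \<Longrightarrow> (Du t j has_real_derivative Du t (Suc j) x) (at x)"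
  using Du_sob unfolding sob_derivs_def by auto
lemma Dv_d: "t \<in> I \<Longrightarrow> j < 2 \<Longrightarrow> (Dv t j has_real_derivative Dv t (Suc j) x) (at x)"
  using Dv_sob unfolding sob_derivs_def by auto

lemma Dv_cont: "t \<in> I \<Longrightarrow> j < 3 \<Longrightarrow> isCont (Dv t j) x"
proof -
  assume t: "t \<in> I" and j: "j < 3"
  show ?thesis
  proof (cases "j < 2")
    case True
    show ?thesis by (rule DERIV_isCont[OF Dv_d[OF t True]])
  next
    case False
    hence j2: "j = 2" using j by auto
    have "(Dv t 3 has_integral (Dv t 2 b - Dv t 2 a)) {a..b}" if "a \<le> b" for a b
      using Dv_sob[OF t] that unfolding sob_derivs_def by auto
    then show ?thesis unfolding j2 by (rule isCont_of_int)
  qed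
qed

lemma unif:
  assumes t0: "t0 \<in> I" "t0 > 0" and j: "j < 3" and e: "e > 0"
  shows "\<exists>d>0. \<forall>s x. \<bar>s - t0\<bar> < d \<longrightarrow> \<bar>Du s j x - Du t0 j x - Dv t0 j x * (s - t0)\<bar> \<le> e * \<bar>s - t0\<bar>"
proof -
  have "eventually (\<lambda>s. dist (hnorm 3 (\<lambda>x. (u x s - u x t0) / (s - t0) - v x t0)) 0 < e/2) (at t0 within I)"
  proof -
    have H: "\<forall>\<epsilon>>0. eventually (\<lambda>s. dist (hnorm 3 (\<lambda>x. (u x s - u x t0) / (s - t0) - v x t0)) 0 < \<epsilon>) (at t0 within I)"
      using dq[OF t0(1)] unfolding tendsto_iff by blast
    show ?thesis by (rule H[rule_format]) (use e in simp)
  qed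
  then obtain d1 where d1: "d1 > 0" "\<And>s. s \<in> I \<Longrightarrow> s \<noteq> t0 \<Longrightarrow> dist s t0 < d1 \<Longrightarrow>
      \<bar>hnorm 3 (\<lambda>x. (u x s - u x t0) / (s - t0) - v x t0)\<bar> < e/2"
    unfolding eventually_at by auto
  have "ereal t0 < T" using t0 I_def by auto
  then obtain r where r: "t0 < r" "ereal r < T" using ereal_dense2 by force
  show ?thesis
  proof (intro exI[of _ "min d1 (min t0 (r - t0))"] conjI allI impI)
    show "min d1 (min t0 (r - t0)) > 0" using d1 t0 r by auto
    fix s x assume s: "\<bar>s - t0\<bar> < min d1 (min t0 (r - t0))"
    show "\<bar>Du s j x - Du t0 j x - Dv t0 j x * (s - t0)\<bar> \<le> e * \<bar>s - t0\<bar>"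
    proof (cases "s = t0")
      case True then show ?thesis by simp
    next
      case False
      have sI: "s \<in> I" unfolding I_def using s r
        by (auto simp: abs_less_iff) (meson ereal_less_eq(3) le_less_trans less_imp_le)
      have st: "s - t0 \<noteq> 0" using False by simp
      define g where "g = (\<lambda>x. (u x s - u x t0) / (s - t0) - v x t0)"
      define Cc where "Cc = (\<lambda>j x. 1 * ((1/(s-t0)) * Du s j x + (-1/(s-t0)) * Du t0 j x) + (-1) * Dv t0 j x)"
      have c1: "sob_derivs 3 (\<lambda>x. (1/(s-t0)) * u x s + (-1/(s-t0)) * u x t0)
           (\<lambda>j x. (1/(s-t0)) * Du s j x + (-1/(s-t0)) * Du t0 j x)"
        by (rule sob_lin[OF sob_4_3[OF Du_sob[OF sI]] sob_4_3[OF Du_sob[OF t0(1)]]]) simp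
      have c2: "sob_derivs 3 g Cc" unfolding Cc_def
        by (rule sob_lin[OF c1 Dv_sob[OF t0(1)]]) (auto simp: g_def diff_divide_distrib)
      hence sg: "sobolev 3 g" unfolding sobolev_def by auto
      have CE: "(SOME D. sob_derivs 3 g D) j = Cc j"
        by (rule chain_unique[OF sob_some[OF sg] c2]) (use j in auto)
      have hb: "\<bar>(SOME D. sob_derivs 3 g D) j x\<bar> \<le> e/2 + (hnorm 3 g)\<^sup>2 / (2*(e/2))"
        by (rule hnorm_sup[OF sg]) (use j e in auto)
      have hn: "\<bar>hnorm 3 g\<bar> < e/2" using d1(2)[OF sI False] s unfolding g_def dist_real_def by auto
      have "\<bar>hnorm 3 g\<bar>\<^sup>2 < (e/2)\<^sup>2" by (rule power_strict_mono[OF hn]) auto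
      hence "(hnorm 3 g)\<^sup>2 < (e/2)\<^sup>2" by simp
      hence "(hnorm 3 g)\<^sup>2 / e < (e/2)\<^sup>2 / e" by (rule divide_strict_right_mono[OF _ e])
      moreover have "(e/2)\<^sup>2 / e = e/4" using e by (simp add: power2_eq_square field_simps)
      moreover have "(hnorm 3 g)\<^sup>2 / (2*(e/2)) = (hnorm 3 g)\<^sup>2 / e" by simp
      ultimately have lt: "(hnorm 3 g)\<^sup>2 / (2*(e/2)) < e/2" using e by linarith
      have cb: "\<bar>Cc j x\<bar> \<le> e" using hb[unfolded CE] lt by linarith
      have "Cc j x = (Du s j x - Du t0 j x) / (s - t0) - Dv t0 j x"
        unfolding Cc_def by (simp add: diff_divide_distrib)
      hence "Cc j x * (s - t0) = (Du s j x - Du t0 j x) / (s - t0) * (s - t0) - Dv t0 j x * (s - t0)"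
        by (simp add: left_diff_distrib)
      moreover have "(Du s j x - Du t0 j x) / (s - t0) * (s - t0) = Du s j x - Du t0 j x" using st by simp
      ultimately have "Du s j x - Du t0 j x - Dv t0 j x * (s - t0) = Cc j x * (s - t0)" by simp
      hence "\<bar>Du s j x - Du t0 j x - Dv t0 j x * (s - t0)\<bar> = \<bar>Cc j x\<bar> * \<bar>s - t0\<bar>" by (simp add: abs_mult)
      also have "\<dots> \<le> e * \<bar>s - t0\<bar>" using cb by (simp add: mult_right_mono)
      finally show ?thesis .
    qed
  qed
qed

lemma U_deriv:
  assumes t0: "t0 \<in> I" "t0 > 0" and j: "j < 3"
  shows "((\<lambda>p. Du (snd p) j (fst p)) has_derivative (\<lambda>h. fst h * Du t0 (Suc j) x0 + snd h * Dv t0 j x0)) (at (x0, t0))"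
  using joint_deriv[OF unif[OF t0 j] Dv_cont[OF t0(1) j] Du_d[OF t0(1) j]] by simp

lemma w_props:
  assumes t: "t \<in> I"
  shows "(\<lambda>z. (u z t)\<^sup>2) \<in> borel_measurable lborel" "integrable lborel (\<lambda>z. (u z t)\<^sup>2)"
    "continuous_on UNIV (\<lambda>z. (u z t)\<^sup>2)" "\<And>x. 0 \<le> (u x t)\<^sup>2"
proof -
  have m: "Du t 0 \<in> borel_measurable lborel" and i: "integrable lborel (\<lambda>x. (Du t 0 x)\<^sup>2)"
    using Du_sob[OF t] unfolding sob_derivs_def by auto
  show "(\<lambda>z. (u z t)\<^sup>2) \<in> borel_measurable lborel" using m unfolding Du0[OF t] by measurable
  show "integrable lborel (\<lambda>z. (u z t)\<^sup>2)" using i unfolding Du0[OF t] .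
  have "isCont (\<lambda>z. u z t) x" for x using DERIV_isCont[OF Du_d[OF t, of 0 x]] unfolding Du0[OF t] by simp
  thus "continuous_on UNIV (\<lambda>z. (u z t)\<^sup>2)" by (intro continuous_at_imp_continuous_on continuous_intros) auto
  show "\<And>x. 0 \<le> (u x t)\<^sup>2" by simp
qed

abbreviation "PP t y \<equiv> LINT z|lborel. G (y - z) * (u z t)\<^sup>2"
abbreviation "PP1 t \<equiv> cP1 (\<lambda>z. (u z t)\<^sup>2)"

lemma PP_deriv: "t \<in> I \<Longrightarrow> (PP t has_real_derivative PP1 t x) (at x)"
  using P_deriv[OF w_props] by simp
lemma PP1_deriv: "t \<in> I \<Longrightarrow> (PP1 t has_real_derivative PP t x - (u x t)\<^sup>2) (at x)"
  using P1_deriv[OF w_props] by simp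

lemma deriv_u: "t \<in> I \<Longrightarrow> deriv (\<lambda>y. u y t) = Du t 1"
  using Du_d[of t 0] Du0[of t] by (auto intro!: ext DERIV_imp_deriv)

lemma v_eq: "t \<in> I \<Longrightarrow> v x t = - (Du t 0 x * Du t 1 x) - 3/2 * PP1 t x"
  using eqn[of t x] deriv_u[of t] DERIV_imp_deriv[OF PP_deriv[of t x]] Du0[of t] by (auto simp: algebra_simps)

lemma Dv1_eq: "t \<in> I \<Longrightarrow> Dv t 1 x = - (Du t 1 x * Du t 1 x + Du t 2 x * Du t 0 x) - 3/2 * (PP t x - (u x t)\<^sup>2)"
proof -
  assume t: "t \<in> I"
  have d0: "(Du t 0 has_real_derivative Du t 1 x) (at x)" using Du_d[OF t, of 0 x] by simp
  have d1: "(Du t 1 has_real_derivative Du t 2 x) (at x)" using Du_d[OF t, of 1 x] by (simp add: numeral_2_eq_2)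
  have e: "Dv t 0 = (\<lambda>x. - (Du t 0 x * Du t 1 x) - 3/2 * PP1 t x)" using Dv0[OF t] v_eq[OF t] by auto
  have d: "((\<lambda>x. - (Du t 0 x * Du t 1 x) - 3/2 * PP1 t x) has_real_derivative
      - (Du t 1 x * Du t 1 x + Du t 2 x * Du t 0 x) - 3/2 * (PP t x - (u x t)\<^sup>2)) (at x)"
    by (rule DERIV_diff[OF DERIV_minus[OF DERIV_mult[OF d0 d1]] DERIV_cmult[OF PP1_deriv[OF t]]])
  have "(Dv t 0 has_real_derivative Dv t 1 x) (at x)" using Dv_d[OF t, of 0 x] by simp
  thus ?thesis using d unfolding e by (rule DERIV_unique)
qed

lemma Dv2_eq: "t \<in> I \<Longrightarrow> Dv t 2 x = - (3 * Du t 1 x * Du t 2 x + Du t 0 x * Du t 3 x) - 3/2 * (PP1 t x - 2 * Du t 0 x * Du t 1 x)"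
proof -
  assume t: "t \<in> I"
  have d0: "(Du t 0 has_real_derivative Du t 1 x) (at x)" using Du_d[OF t, of 0 x] by simp
  have d1: "(Du t 1 has_real_derivative Du t 2 x) (at x)" using Du_d[OF t, of 1 x] by (simp add: numeral_2_eq_2)
  have d2: "(Du t 2 has_real_derivative Du t 3 x) (at x)" using Du_d[OF t, of 2 x] by (simp add: numeral_3_eq_3 numeral_2_eq_2)
  have ue: "\<And>x. u x t = Du t 0 x" using Du0[OF t] by simp
  have d0': "((\<lambda>x. u x t) has_real_derivative Du t 1 x) (at x)" using d0 Du0[OF t] by simp
  have e: "Dv t 1 = (\<lambda>x. - (Du t 1 x * Du t 1 x + Du t 2 x * Du t 0 x) - 3/2 * (PP t x - (u x t)\<^sup>2))"
    using Dv1_eq[OF t] by auto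
  have d: "((\<lambda>x. - (Du t 1 x * Du t 1 x + Du t 2 x * Du t 0 x) - 3/2 * (PP t x - (u x t)\<^sup>2)) has_real_derivative
      - ((Du t 2 x * Du t 1 x + Du t 2 x * Du t 1 x) + (Du t 3 x * Du t 0 x + Du t 1 x * Du t 2 x))
      - 3/2 * (PP1 t x - of_nat 2 * (Du t 1 x * (u x t) ^ (2 - Suc 0)))) (at x)"
    by (rule DERIV_diff[OF DERIV_minus[OF DERIV_add[OF DERIV_mult[OF d1 d1] DERIV_mult[OF d2 d0]]]
                          DERIV_cmult[OF DERIV_diff[OF PP_deriv[OF t] DERIV_power[OF d0']]]])
  have "(Dv t 1 has_real_derivative Dv t 2 x) (at x)" using Dv_d[OF t, of 1 x] by (simp add: numeral_2_eq_2)
  hence "Dv t 2 x = - ((Du t 2 x * Du t 1 x + Du t 2 x * Du t 1 x) + (Du t 3 x * Du t 0 x + Du t 1 x * Du t 2 x))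
      - 3/2 * (PP1 t x - of_nat 2 * (Du t 1 x * (u x t) ^ (2 - Suc 0)))" using d unfolding e by (rule DERIV_unique)
  thus ?thesis unfolding ue by (simp add: algebra_simps)
qed

end


context dpctx
begin

lemma strip_I: "p \<in> {p. 0 < snd p \<and> ereal (snd p) < T} \<Longrightarrow> snd p \<in> I \<and> snd p > 0"
  unfolding I_def by auto

lemma open_strip: "open {p::real\<times>real. 0 < snd p \<and> ereal (snd p) < T}"
proof (cases T)
  case (real r)
  have "{p::real\<times>real. 0 < snd p \<and> ereal (snd p) < T} = {p. 0 < snd p} \<inter> {p. snd p < r}" using real by auto
  moreover have "open {p::real\<times>real. 0 < snd p}" "open {p::real\<times>real. snd p < r}"
    by (auto intro!: open_Collect_less continuous_intros)
  ultimately show ?thesis by auto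
next
  case PInf
  have "{p::real\<times>real. 0 < snd p \<and> ereal (snd p) < T} = {p. 0 < snd p}" using PInf by auto
  moreover have "open {p::real\<times>real. 0 < snd p}" by (auto intro!: open_Collect_less continuous_intros)
  ultimately show ?thesis by auto
next
  case MInf
  then show ?thesis by auto
qed

lemma ux_eq: "t \<in> I \<Longrightarrow> ux u (x, t) = Du t 1 x"
  unfolding ux_def using deriv_u by simp

lemma uxx_eq: "t \<in> I \<Longrightarrow> uxx u (x, t) = Du t 2 x"
proof -
  assume t: "t \<in> I"
  have "(\<lambda>y. deriv (\<lambda>z. u z t) y) = Du t 1" using deriv_u[OF t] by auto
  thus ?thesis unfolding uxx_def using DERIV_imp_deriv[OF Du_d[OF t, of 1 x]] by (simp add: numeral_2_eq_2)
qed

lemma mm_eq: "t \<in> I \<Longrightarrow> mm u (x, t) = Du t 0 x - Du t 2 x"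
  unfolding mm_def using uxx_eq Du0 by simp

lemma FF_eq: "t \<in> I \<Longrightarrow> FF u (x, t) = Du t 1 x * Du t 1 x - 2 * Du t 0 x * Du t 1 x + Du t 0 x * Du t 2 x"
  unfolding FF_def using uxx_eq ux_eq Du0 by (simp add: power2_eq_square)

lemma core:
  assumes p: "(x0, t0) \<in> {p. 0 < snd p \<and> ereal (snd p) < T}"
  shows "\<exists>Mx Mt Fx Ft. (mm u has_derivative (\<lambda>h. fst h * Mx + snd h * Mt)) (at (x0, t0)) \<and>
           (FF u has_derivative (\<lambda>h. fst h * Fx + snd h * Ft)) (at (x0, t0)) \<and>
           Fx - Mt = -2 * FF u (x0, t0)"
proof -
  define S where "S = {p::real\<times>real. 0 < snd p \<and> ereal (snd p) < T}"
  have t0: "t0 \<in> I" "t0 > 0" using strip_I[OF p] by auto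
  have SI: "\<And>q. q \<in> S \<Longrightarrow> snd q \<in> I" using strip_I unfolding S_def by auto
  note d0 = U_deriv[OF t0, of 0 x0] and d1 = U_deriv[OF t0, of 1 x0] and d2 = U_deriv[OF t0, of 2 x0]
  define U0 where "U0 = Du t0 0 x0"
  define U1 where "U1 = Du t0 1 x0"
  define U2 where "U2 = Du t0 2 x0"
  define U3 where "U3 = Du t0 3 x0"
  define V0 where "V0 = Dv t0 0 x0"
  define V1 where "V1 = Dv t0 1 x0"
  define V2 where "V2 = Dv t0 2 x0"
  have e0: "Du t0 (Suc 0) x0 = U1" and e1: "Du t0 (Suc 1) x0 = U2" and e2: "Du t0 (Suc 2) x0 = U3"
    unfolding U1_def U2_def U3_def by (simp_all add: numeral_eq_Suc)
  have d0': "((\<lambda>p. Du (snd p) 0 (fst p)) has_derivative (\<lambda>h. fst h * U1 + snd h * V0)) (at (x0, t0))"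
    using d0 unfolding e0 V0_def by simp
  have d1': "((\<lambda>p. Du (snd p) 1 (fst p)) has_derivative (\<lambda>h. fst h * U2 + snd h * V1)) (at (x0, t0))"
    using d1 unfolding e1 V1_def by simp
  have d2': "((\<lambda>p. Du (snd p) 2 (fst p)) has_derivative (\<lambda>h. fst h * U3 + snd h * V2)) (at (x0, t0))"
    using d2 unfolding e2 V2_def by simp
  have HM: "(mm u has_derivative (\<lambda>h. fst h * (U1 - U3) + snd h * (V0 - V2))) (at (x0, t0))"
  proof (rule has_derivative_transform_within_open[OF _ open_strip p])
    show "((\<lambda>p. Du (snd p) 0 (fst p) - Du (snd p) 2 (fst p)) has_derivative (\<lambda>h. fst h * (U1 - U3) + snd h * (V0 - V2))) (at (x0, t0))"
      by (rule has_derivative_eq_rhs[OF has_derivative_diff[OF d0' d2']]) (auto simp: algebra_simps)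
    show "\<And>q. q \<in> {p. 0 < snd p \<and> ereal (snd p) < T} \<Longrightarrow> Du (snd q) 0 (fst q) - Du (snd q) 2 (fst q) = mm u q"
      using mm_eq strip_I by (metis prod.collapse)
  qed
  define Fx where "Fx = 3 * U1 * U2 - 2 * U1 * U1 - 2 * U0 * U2 + U0 * U3"
  define Ft where "Ft = 2 * U1 * V1 - 2 * (V0 * U1 + U0 * V1) + (V0 * U2 + U0 * V2)"
  have HF: "(FF u has_derivative (\<lambda>h. fst h * Fx + snd h * Ft)) (at (x0, t0))"
  proof (rule has_derivative_transform_within_open[OF _ open_strip p])
    show "((\<lambda>p. Du (snd p) 1 (fst p) * Du (snd p) 1 (fst p) - 2 * Du (snd p) 0 (fst p) * Du (snd p) 1 (fst p)
              + Du (snd p) 0 (fst p) * Du (snd p) 2 (fst p)) has_derivative (\<lambda>h. fst h * Fx + snd h * Ft)) (at (x0, t0))"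
      by (rule has_derivative_eq_rhs[OF has_derivative_add[OF has_derivative_diff[OF has_derivative_mult[OF d1' d1']
            has_derivative_mult[OF has_derivative_mult_right[OF d0'] d1']] has_derivative_mult[OF d0' d2']]])
         (auto simp: Fx_def Ft_def U0_def U1_def U2_def V0_def V1_def Du0[OF t0(1)] algebra_simps)
    show "\<And>q. q \<in> {p. 0 < snd p \<and> ereal (snd p) < T} \<Longrightarrow>
       Du (snd q) 1 (fst q) * Du (snd q) 1 (fst q) - 2 * Du (snd q) 0 (fst q) * Du (snd q) 1 (fst q)
              + Du (snd q) 0 (fst q) * Du (snd q) 2 (fst q) = FF u q"
      using FF_eq strip_I by (metis prod.collapse)
  qed
  have rel: "Fx - (V0 - V2) = -2 * FF u (x0, t0)"
    unfolding FF_eq[OF t0(1)] Fx_def V0_def V2_def Dv0[OF t0(1)] Dv2_eq[OF t0(1)]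
    using v_eq[OF t0(1), of x0] unfolding U0_def U1_def U2_def U3_def
    by (simp add: algebra_simps)
  show ?thesis using HM HF rel by blast
qed

end


lemma fst_deriv':
  fixes p :: "real \<times> real"
  assumes "(g has_real_derivative d) (at (fst p))"
  shows "((\<lambda>q. g (fst q)) has_derivative (\<lambda>h. fst h * d)) (at p)"
  by (rule has_derivative_eq_rhs[OF fst_deriv[OF assms]]) auto

theorem theorem2p4:
  fixes u0 :: "real \<Rightarrow> real" and u :: "real \<Rightarrow> real \<Rightarrow> real" and T :: ereal
    and \<mu> \<sigma> :: real and U :: "(real \<times> real) set"
  assumes u0_H4: "sobolev 4 u0"
    and u0_nontriv: "\<exists>x. u0 x \<noteq> 0"
    and T_pos: "T > 0"
    and sol: "dp_solution u0 T u"
    and maximal: "\<And>T' u'. dp_solution u0 T' u' \<Longrightarrow> T' \<le> T"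
    and sign: "\<sigma> = 1 \<or> \<sigma> = -1"
    and U_comp: "U \<in> components {p. 0 < snd p \<and> ereal (snd p) < T
                                   \<and> wedge (om1 u) (om2 u \<mu> \<sigma>) p \<noteq> 0}"
    and U_sc: "simply_connected U"
  shows "\<forall>p\<in>U. \<exists>V. open V \<and> p \<in> V \<and> V \<subseteq> U \<and>
           (\<exists>a b c. smooth_on V a \<and> smooth_on V b \<and> smooth_on V c \<and>
              (let \<omega>1 = om1 u; \<omega>2 = om2 u \<mu> \<sigma>; \<omega>12 = om3 u \<mu> \<sigma>;
                   \<omega>13 = form_add (form_scale a \<omega>1) (form_scale b \<omega>2);
                   \<omega>23 = form_add (form_scale b \<omega>1) (form_scale c \<omega>2)
               in ext_deriv_on V \<omega>1 (wedge \<omega>12 \<omega>2) \<and>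
                  ext_deriv_on V \<omega>2 (wedge \<omega>1 \<omega>12) \<and>
                  (\<forall>q\<in>V. wedge \<omega>1 \<omega>13 q + wedge \<omega>2 \<omega>23 q = 0) \<and>
                  ext_deriv_on V \<omega>12 (\<lambda>q. - wedge \<omega>13 \<omega>23 q) \<and>
                  ext_deriv_on V \<omega>13 (wedge \<omega>12 \<omega>23) \<and>
                  ext_deriv_on V \<omega>23 (\<lambda>q. - wedge \<omega>12 \<omega>13 q)))"
proof -
  define I where "I = {t::real. 0 \<le> t \<and> ereal t < T}"
  obtain v where sobu: "\<forall>t\<in>I. sobolev 4 (\<lambda>x. u x t)"
    and sobv: "\<forall>t\<in>I. sobolev 3 (\<lambda>x. v x t)"
    and dq: "\<forall>t\<in>I. ((\<lambda>s. hnorm 3 (\<lambda>x. (u x s - u x t) / (s - t) - v x t)) \<longlongrightarrow> 0) (at t within I)"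
    and eqn: "\<forall>t\<in>I. \<forall>x. v x t + u x t * deriv (\<lambda>y. u y t) x
               + 3/2 * deriv (\<lambda>y. LINT z|lborel. G (y - z) * (u z t)\<^sup>2) x = 0"
    using sol unfolding dp_solution_def Let_def I_def by blast
  have loc: "dpctx u v T I" unfolding dpctx_def using I_def sobu sobv dq eqn by blast
  define Sg where "Sg = {p::real\<times>real. 0 < snd p \<and> ereal (snd p) < T}"
  have core': "\<exists>Mx Mt Fx Ft. (mm u has_derivative (\<lambda>h. fst h * Mx + snd h * Mt)) (at q) \<and>
           (FF u has_derivative (\<lambda>h. fst h * Fx + snd h * Ft)) (at q) \<and>
           Fx - Mt = -2 * FF u q" if q: "q \<in> Sg" for q
    using dpctx.core[OF loc, of "fst q" "snd q"] q unfolding Sg_def by simp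
  have openSg: "open Sg" unfolding Sg_def by (rule dpctx.open_strip[OF loc])
  define W where "W = wedge (om1 u) (om2 u \<mu> \<sigma>)"
  have W_eq: "W = (\<lambda>p. mm u p * (\<mu> * FF u p) - FF u p * (\<mu> * mm u p + \<sigma> * 2 * sqrt (1 + \<mu>\<^sup>2)))"
    unfolding W_def wedge_def om1_def om2_def by auto
  have "continuous (at q) W" if q: "q \<in> Sg" for q
  proof -
    obtain Mx Mt Fx Ft where "(mm u has_derivative (\<lambda>h. fst h * Mx + snd h * Mt)) (at q)"
      "(FF u has_derivative (\<lambda>h. fst h * Fx + snd h * Ft)) (at q)" using core'[OF q] by blast
    hence "continuous (at q) (mm u)" "continuous (at q) (FF u)" by (auto dest: has_derivative_continuous)
    thus ?thesis unfolding W_eq by (intro continuous_intros) auto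
  qed
  hence contW: "continuous_on Sg W" by (intro continuous_at_imp_continuous_on ballI)
  have S_eq: "{p. 0 < snd p \<and> ereal (snd p) < T \<and> wedge (om1 u) (om2 u \<mu> \<sigma>) p \<noteq> 0} = Sg \<inter> W -` (- {0})"
    unfolding Sg_def W_def by auto
  have openS: "open {p. 0 < snd p \<and> ereal (snd p) < T \<and> wedge (om1 u) (om2 u \<mu> \<sigma>) p \<noteq> 0}"
    unfolding S_eq by (rule continuous_open_preimage[OF contW openSg]) auto
  have openU: "open U" by (rule open_components[OF openS U_comp])
  have USg: "U \<subseteq> Sg" using in_components_subset[OF U_comp] unfolding Sg_def by auto
  show ?thesis
  proof
    fix p assume pU: "p \<in> U"
    define x0 where "x0 = fst p - 1"
    define V where "V = U \<inter> {q. x0 < fst q}"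
    have openV: "open V" unfolding V_def
      by (intro open_Int openU open_Collect_less continuous_intros)
    have pV: "p \<in> V" unfolding V_def x0_def using pU by auto
    have Vx: "\<forall>q\<in>V. fst q > x0" unfolding V_def by auto
    define a where "a = (\<lambda>q::real\<times>real. LPf (fst (Aco \<mu>)) (snd (Aco \<mu>)) x0 (fst q))"
    define b where "b = (\<lambda>q::real\<times>real. LPf (fst (Bco \<mu>)) (snd (Bco \<mu>)) x0 (fst q))"
    define c where "c = (\<lambda>q::real\<times>real. LPf (fst (Cco \<mu>)) (snd (Cco \<mu>)) x0 (fst q))"
    have sm: "smooth_on V a" "smooth_on V b" "smooth_on V c"
      unfolding a_def b_def c_def using LPs_smooth[OF LPf_LPs Vx] by auto
    have pw: "(\<exists>f' g'. (fst (om1 u) has_derivative f') (at q) \<and> (snd (om1 u) has_derivative g') (at q) \<and>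
            wedge (om3 u \<mu> \<sigma>) (om2 u \<mu> \<sigma>) q = g' (1, 0) - f' (0, 1)) \<and>
          (\<exists>f' g'. (fst (om2 u \<mu> \<sigma>) has_derivative f') (at q) \<and> (snd (om2 u \<mu> \<sigma>) has_derivative g') (at q) \<and>
            wedge (om1 u) (om3 u \<mu> \<sigma>) q = g' (1, 0) - f' (0, 1)) \<and>
          wedge (om1 u) (form_add (form_scale a (om1 u)) (form_scale b (om2 u \<mu> \<sigma>))) q +
            wedge (om2 u \<mu> \<sigma>) (form_add (form_scale b (om1 u)) (form_scale c (om2 u \<mu> \<sigma>))) q = 0 \<and>
          (\<exists>f' g'. (fst (om3 u \<mu> \<sigma>) has_derivative f') (at q) \<and> (snd (om3 u \<mu> \<sigma>) has_derivative g') (at q) \<and>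
            - wedge (form_add (form_scale a (om1 u)) (form_scale b (om2 u \<mu> \<sigma>)))
                    (form_add (form_scale b (om1 u)) (form_scale c (om2 u \<mu> \<sigma>))) q = g' (1, 0) - f' (0, 1)) \<and>
          (\<exists>f' g'. (fst (form_add (form_scale a (om1 u)) (form_scale b (om2 u \<mu> \<sigma>))) has_derivative f') (at q) \<and>
                   (snd (form_add (form_scale a (om1 u)) (form_scale b (om2 u \<mu> \<sigma>))) has_derivative g') (at q) \<and>
            wedge (om3 u \<mu> \<sigma>) (form_add (form_scale b (om1 u)) (form_scale c (om2 u \<mu> \<sigma>))) q = g' (1, 0) - f' (0, 1)) \<and>
          (\<exists>f' g'. (fst (form_add (form_scale b (om1 u)) (form_scale c (om2 u \<mu> \<sigma>))) has_derivative f') (at q) \<and>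
                   (snd (form_add (form_scale b (om1 u)) (form_scale c (om2 u \<mu> \<sigma>))) has_derivative g') (at q) \<and>
            - wedge (om3 u \<mu> \<sigma>) (form_add (form_scale a (om1 u)) (form_scale b (om2 u \<mu> \<sigma>))) q = g' (1, 0) - f' (0, 1))"
      if qV: "q \<in> V" for q
    proof -
      have qS: "q \<in> Sg" using qV USg unfolding V_def by auto
      have qx: "fst q > x0" using qV Vx by auto
      obtain Mx Mt Fx Ft where HM: "(mm u has_derivative (\<lambda>h. fst h * Mx + snd h * Mt)) (at q)"
        and HF: "(FF u has_derivative (\<lambda>h. fst h * Fx + snd h * Ft)) (at q)"
        and rel: "Fx - Mt = -2 * FF u q" using core'[OF qS] by blast
      have Ha: "(a has_derivative (\<lambda>h. fst h * LPd (fst (Aco \<mu>)) (snd (Aco \<mu>)) x0 (fst q))) (at q)"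
        unfolding a_def by (rule fst_deriv'[OF LPf_deriv[OF qx, unfolded LPd_def[symmetric]]])
      have Hb: "(b has_derivative (\<lambda>h. fst h * LPd (fst (Bco \<mu>)) (snd (Bco \<mu>)) x0 (fst q))) (at q)"
        unfolding b_def by (rule fst_deriv'[OF LPf_deriv[OF qx, unfolded LPd_def[symmetric]]])
      have Hc: "(c has_derivative (\<lambda>h. fst h * LPd (fst (Cco \<mu>)) (snd (Cco \<mu>)) x0 (fst q))) (at q)"
        unfolding c_def by (rule fst_deriv'[OF LPf_deriv[OF qx, unfolded LPd_def[symmetric]]])
      note od = abc_odes[OF qx, of \<mu>]
      have o1: "LPd (fst (Aco \<mu>)) (snd (Aco \<mu>)) x0 (fst q) + \<mu> * LPd (fst (Bco \<mu>)) (snd (Bco \<mu>)) x0 (fst q)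
          = 2 * a q + 4 * \<mu> * b q - 2 * c q" using od(1) unfolding a_def b_def c_def by simp
      have o2: "LPd (fst (Bco \<mu>)) (snd (Bco \<mu>)) x0 (fst q) + \<mu> * LPd (fst (Cco \<mu>)) (snd (Cco \<mu>)) x0 (fst q)
          = -2 * \<mu> * a q + 4 * b q + 2 * \<mu> * c q" using od(2) unfolding a_def b_def c_def by simp
      have o3: "a q * c q - (b q)\<^sup>2 = -1" using od(3) unfolding a_def b_def c_def by simp
      note fp = forms_pointwise[OF HM HF rel Ha Hb Hc o1 o2 o3 sign]
      show ?thesis using fp by blast
    qed
    show "\<exists>V. open V \<and> p \<in> V \<and> V \<subseteq> U \<and>
           (\<exists>a b c. smooth_on V a \<and> smooth_on V b \<and> smooth_on V c \<and>
              (let \<omega>1 = om1 u; \<omega>2 = om2 u \<mu> \<sigma>; \<omega>12 = om3 u \<mu> \<sigma>;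
                   \<omega>13 = form_add (form_scale a \<omega>1) (form_scale b \<omega>2);
                   \<omega>23 = form_add (form_scale b \<omega>1) (form_scale c \<omega>2)
               in ext_deriv_on V \<omega>1 (wedge \<omega>12 \<omega>2) \<and>
                  ext_deriv_on V \<omega>2 (wedge \<omega>1 \<omega>12) \<and>
                  (\<forall>q\<in>V. wedge \<omega>1 \<omega>13 q + wedge \<omega>2 \<omega>23 q = 0) \<and>
                  ext_deriv_on V \<omega>12 (\<lambda>q. - wedge \<omega>13 \<omega>23 q) \<and>
                  ext_deriv_on V \<omega>13 (wedge \<omega>12 \<omega>23) \<and>
                  ext_deriv_on V \<omega>23 (\<lambda>q. - wedge \<omega>12 \<omega>13 q)))"
      apply (rule exI[of _ V])
      apply (intro conjI openV pV)
       apply (simp add: V_def)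
      apply (rule exI[of _ a], rule exI[of _ b], rule exI[of _ c])
      apply (intro conjI sm)
      unfolding Let_def ext_deriv_on_def using pw by blast
  qed
qed


end
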